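(* Let $V=H^0(\mathbb{P}^2,T_{\mathbb{P}^2})$ (an $8$-dimensional complex vector space) and let $\mathcal{S}\subset V^4$ be the set of ordered $4$-tuples $S=(w_1,\dots,w_4)$ of linearly independent sections generating $T_{\mathbb{P}^2}$ at every point; $\mathcal{S}$ is a nonempty Zariski open subset of $V^4$. Then there is a nonempty Zariski open subset $U\subset\mathcal{S}$ such that for every $S\in U$ the morphism $\phi_S:\mathbb{P}^2\to\mathrm{Gr}(2,\mathbb{C}^4)$ is generically injective (birational onto its image).
   Context: Work over $\mathbb{C}$. $T_{\mathbb{P}^2}$ is the tangent bundle of $\mathbb{P}^2$. $\mathrm{Gr}(2,\mathbb{C}^4)$ is the Grassmannian of $2$-dimensional quotients of $\mathbb{C}^4$, with universal quotient bundle $\mathcal{O}^4\to Q\to 0$. For an ordered $4$-tuple $S=(w_1,\dots,w_4)$ of global sections of $T_{\mathbb{P}^2}$ generating $T_{\mathbb{P}^2}$ at every point, $\phi_S:\mathbb{P}^2\to\mathrm{Gr}(2,\mathbb{C}^4)$ is the morphism sending $x$ to the quotient $\mathbb{C}^4=\mathcal{O}^4_{\mathbb{P}^2}|_x\to T_{\mathbb{P}^2}|_x$ induced by $(a_1,\dots,a_4)\mapsto\sum a_iw_i(x)$; thus $\phi_S^*Q\cong T_{\mathbb{P}^2}$. *)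

theory Defs
  imports "HOL-Analysis.Analysis"
begin

inductive_set polyfun :: "('a \<Rightarrow> complex) set \<Rightarrow> ('a \<Rightarrow> complex) set"
  for C :: "('a \<Rightarrow> complex) set" where
  const: "(\<lambda>x. c) \<in> polyfun C"
| coord: "f \<in> C \<Longrightarrow> f \<in> polyfun C"
| add: "f \<in> polyfun C \<Longrightarrow> g \<in> polyfun C \<Longrightarrow> (\<lambda>x. f x + g x) \<in> polyfun C"
| mult: "f \<in> polyfun C \<Longrightarrow> g \<in> polyfun C \<Longrightarrow> (\<lambda>x. f x * g x) \<in> polyfun C"

definition zariski_closed :: "('a \<Rightarrow> complex) set \<Rightarrow> 'a set \<Rightarrow> 'a set \<Rightarrow> bool" where
  "zariski_closed C X Z \<longleftrightarrow>
     (\<exists>F \<subseteq> polyfun C. Z = {x \<in> X. \<forall>f \<in> F. f x = 0})"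

definition zariski_open :: "('a \<Rightarrow> complex) set \<Rightarrow> 'a set \<Rightarrow> 'a set \<Rightarrow> bool" where
  "zariski_open C X U \<longleftrightarrow> U \<subseteq> X \<and> zariski_closed C X (X - U)"

text \<open>Points of P^2 are represented by nonzero vectors of C^3; two represent the same
point iff they are proportional.  Zariski open subsets of P^2 are represented by the
corresponding cones of nonzero vectors: complements of common zero loci of
homogeneous polynomials.\<close>

definition coords3 :: "(complex^3 \<Rightarrow> complex) set" where
  "coords3 = {(\<lambda>x. x $ i) | i. True}"

definition homogeneous :: "(complex^3 \<Rightarrow> complex) \<Rightarrow> bool" where
  "homogeneous f \<longleftrightarrow> (\<exists>d::nat. \<forall>c x. f (c *s x) = c ^ d * f x)"

definition proj_equiv :: "complex^3 \<Rightarrow> complex^3 \<Rightarrow> bool" where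
  "proj_equiv x y \<longleftrightarrow> (\<exists>c::complex. y = c *s x)"

definition P2_zariski_open :: "(complex^3) set \<Rightarrow> bool" where
  "P2_zariski_open W \<longleftrightarrow> W \<subseteq> {x. x \<noteq> 0} \<and>
     (\<exists>F \<subseteq> polyfun coords3. (\<forall>f \<in> F. homogeneous f) \<and>
        {x. x \<noteq> 0} - W = {x. x \<noteq> 0 \<and> (\<forall>f \<in> F. f x = 0)})"

text \<open>By the Euler sequence, H^0(P^2, T) = gl_3(C) / C*Id, identified with the
traceless matrices sl_3(C).  The section given by A takes the value A v mod v at the
point [v] (tangent space T_[v] = C^3 / C v).\<close>

type_synonym tuple4 = "complex^3^3^4"

definition V4 :: "tuple4 set" where
  "V4 = {S. \<forall>k. trace (S $ k) = 0}"

definition coords_V4 :: "(tuple4 \<Rightarrow> complex) set" where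
  "coords_V4 = {(\<lambda>S. S $ k $ i $ j) | k i j. True}"

definition lin_indep4 :: "tuple4 \<Rightarrow> bool" where
  "lin_indep4 S \<longleftrightarrow>
     (\<forall>a::complex^4. (\<forall>i j. (\<Sum>k\<in>UNIV. a $ k * S $ k $ i $ j) = 0) \<longrightarrow> a = 0)"

definition generates :: "tuple4 \<Rightarrow> bool" where
  "generates S \<longleftrightarrow> (\<forall>v::complex^3. v \<noteq> 0 \<longrightarrow>
     (\<forall>w::complex^3. \<exists>(a::complex^4) (t::complex).
        w = (\<Sum>k\<in>UNIV. a $ k *s (S $ k *v v)) + t *s v))"

definition Sset :: "tuple4 set" where
  "Sset = {S \<in> V4. lin_indep4 S \<and> generates S}"

text \<open>phi_S([v]) is the quotient C^4 -> T_[v], a |-> sum a_k w_k([v]); a point of the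
Grassmannian of 2-dimensional quotients of C^4 is determined by (and identified with)
its kernel, a 2-dimensional subspace of C^4.\<close>
definition phi :: "tuple4 \<Rightarrow> complex^3 \<Rightarrow> (complex^4) set" where
  "phi S v = {a. \<exists>t::complex. (\<Sum>k\<in>UNIV. a $ k *s (S $ k *v v)) = t *s v}"

definition generically_injective :: "tuple4 \<Rightarrow> bool" where
  "generically_injective S \<longleftrightarrow>
     (\<exists>W. P2_zariski_open W \<and> W \<noteq> {} \<and>
        (\<forall>x \<in> W. \<forall>y. y \<noteq> 0 \<and> phi S y = phi S x \<longrightarrow> proj_equiv x y))"

end

theory Submission
  imports Defs
begin


section \<open>Polynomial closure\<close>

lemma pf_const: "(\<lambda>x. c) \<in> polyfun C" by (rule polyfun.const)
lemma pf_add: "f \<in> polyfun C \<Longrightarrow> g \<in> polyfun C \<Longrightarrow> (\<lambda>x. f x + g x) \<in> polyfun C"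
  by (rule polyfun.add)
lemma pf_mult: "f \<in> polyfun C \<Longrightarrow> g \<in> polyfun C \<Longrightarrow> (\<lambda>x. f x * g x) \<in> polyfun C"
  by (rule polyfun.mult)
lemma pf_uminus: "f \<in> polyfun C \<Longrightarrow> (\<lambda>x. - f x) \<in> polyfun C"
proof -
  assume "f \<in> polyfun C"
  then have "(\<lambda>x. (-1) * f x) \<in> polyfun C" by (intro polyfun.mult polyfun.const)
  then show ?thesis by simp
qed
lemma pf_diff: "f \<in> polyfun C \<Longrightarrow> g \<in> polyfun C \<Longrightarrow> (\<lambda>x. f x - g x) \<in> polyfun C"
proof -
  assume "f \<in> polyfun C" "g \<in> polyfun C"
  then have "(\<lambda>x. f x + - g x) \<in> polyfun C" by (intro polyfun.add pf_uminus)
  then show ?thesis by simp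
qed
lemma pf_sum: "(\<And>a. (\<lambda>x. f a x) \<in> polyfun C) \<Longrightarrow> (\<lambda>x. \<Sum>a\<in>A. f a x) \<in> polyfun C"
proof (induction A rule: infinite_finite_induct)
  case (infinite A) then show ?case by (simp add: polyfun.const)
next
  case empty then show ?case by (simp add: polyfun.const)
next
  case (insert a A) then show ?case by (simp add: polyfun.add)
qed
lemma pf_prod: "(\<And>a. (\<lambda>x. f a x) \<in> polyfun C) \<Longrightarrow> (\<lambda>x. \<Prod>a\<in>A. f a x) \<in> polyfun C"
proof (induction A rule: infinite_finite_induct)
  case (infinite A) then show ?case by (simp add: polyfun.const)
next
  case empty then show ?case by (simp add: polyfun.const)
next
  case (insert a A) then show ?case by (simp add: polyfun.mult)
qed
lemma pf_if: "f \<in> polyfun C \<Longrightarrow> g \<in> polyfun C \<Longrightarrow> (\<lambda>x. if P then f x else g x) \<in> polyfun C"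
  by (cases P) simp_all
lemma pf_coordV: "(\<lambda>S. S $ k $ i $ j) \<in> polyfun coords_V4"
  by (rule polyfun.coord) (auto simp: coords_V4_def)
lemma pf_coord3: "(\<lambda>x. x $ i) \<in> polyfun coords3"
  by (rule polyfun.coord) (auto simp: coords3_def)

lemma pf_det:
  fixes f :: "'a \<Rightarrow> complex^'n^'n"
  assumes "\<And>i j. (\<lambda>x. f x $ i $ j) \<in> polyfun C"
  shows "(\<lambda>x. det (f x)) \<in> polyfun C"
  unfolding det_def
  by (intro pf_sum pf_mult pf_const pf_prod assms)

definition det3 :: "complex^3 \<Rightarrow> complex^3 \<Rightarrow> complex^3 \<Rightarrow> complex" where
  "det3 a b c = a$1*(b$2*c$3 - b$3*c$2) - a$2*(b$1*c$3 - b$3*c$1) + a$3*(b$1*c$2 - b$2*c$1)"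

lemma det3_id: "det3 x b c *s a - det3 x a c *s b + det3 x a b *s c = det3 a b c *s x"
  by (simp add: vec_eq_iff forall_3 det3_def algebra_simps)

definition D4 :: "(nat\<times>nat\<times>nat) set" where
  "D4 = {(4,0,0), (3,1,0), (3,0,1), (2,2,0), (2,1,1), (2,0,2), (1,3,0), (1,2,1), (1,1,2), (1,0,3), (0,4,0), (0,3,1), (0,2,2), (0,1,3), (0,0,4)}"
definition D3 :: "(nat\<times>nat\<times>nat) set" where
  "D3 = {(3,0,0), (2,1,0), (2,0,1), (1,2,0), (1,1,1), (1,0,2), (0,3,0), (0,2,1), (0,1,2), (0,0,3)}"

definition monm :: "nat\<times>nat\<times>nat \<Rightarrow> complex^3 \<Rightarrow> complex" where
  "monm t v = (case t of (a,b,c) \<Rightarrow> v$1^a * v$2^b * v$3^c)"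

definition cf :: "complex^3^3 \<Rightarrow> complex^3^3 \<Rightarrow> nat\<times>nat\<times>nat \<Rightarrow> complex" where
 "cf A B t = (if t = (0,0,3) then A$1$3 * B$2$3 - A$2$3 * B$1$3
  else if t = (0,1,2) then - A$1$3 * B$3$3 + A$3$3 * B$1$3 + A$1$2 * B$2$3 + A$1$3 * B$2$2 - A$2$2 * B$1$3 - A$2$3 * B$1$2
  else if t = (0,2,1) then - A$1$2 * B$3$3 - A$1$3 * B$3$2 + A$3$2 * B$1$3 + A$3$3 * B$1$2 + A$1$2 * B$2$2 - A$2$2 * B$1$2
  else if t = (0,3,0) then - A$1$2 * B$3$2 + A$3$2 * B$1$2
  else if t = (1,0,2) then A$2$3 * B$3$3 - A$3$3 * B$2$3 + A$1$1 * B$2$3 + A$1$3 * B$2$1 - A$2$1 * B$1$3 - A$2$3 * B$1$1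
  else if t = (1,1,1) then A$2$2 * B$3$3 + A$2$3 * B$3$2 - A$3$2 * B$2$3 - A$3$3 * B$2$2 - A$1$1 * B$3$3 - A$1$3 * B$3$1 + A$3$1 * B$1$3 + A$3$3 * B$1$1 + A$1$1 * B$2$2 + A$1$2 * B$2$1 - A$2$1 * B$1$2 - A$2$2 * B$1$1
  else if t = (1,2,0) then A$2$2 * B$3$2 - A$3$2 * B$2$2 - A$1$1 * B$3$2 - A$1$2 * B$3$1 + A$3$1 * B$1$2 + A$3$2 * B$1$1
  else if t = (2,0,1) then A$2$1 * B$3$3 + A$2$3 * B$3$1 - A$3$1 * B$2$3 - A$3$3 * B$2$1 + A$1$1 * B$2$1 - A$2$1 * B$1$1
  else if t = (2,1,0) then A$2$1 * B$3$2 + A$2$2 * B$3$1 - A$3$1 * B$2$2 - A$3$2 * B$2$1 - A$1$1 * B$3$1 + A$3$1 * B$1$1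
  else if t = (3,0,0) then A$2$1 * B$3$1 - A$3$1 * B$2$1
  else 0)"

lemma pexp: "det3 v (A *v v) (B *v v) = (\<Sum>t\<in>D3. cf A B t * monm t v)"
  by (simp add: D3_def cf_def monm_def det3_def matrix_vector_mult_def sum_3 algebra_simps power2_eq_square power3_eq_cube)

definition mentry :: "complex^3^3 \<Rightarrow> complex^3^3 \<Rightarrow> 3 \<Rightarrow> nat\<times>nat\<times>nat \<Rightarrow> complex" where
  "mentry A B m t = (case t of (a,b,c) \<Rightarrow>
     if m = 1 then (if a \<ge> 1 then cf A B (a-1,b,c) else 0)
     else if m = 2 then (if b \<ge> 1 then cf A B (a,b-1,c) else 0)
     else (if c \<ge> 1 then cf A B (a,b,c-1) else 0))"

lemma mentry_sum: "(\<Sum>t\<in>D4. mentry A B m t * monm t v) = v$m * (\<Sum>t\<in>D3. cf A B t * monm t v)"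
proof -
  have "m = 1 \<or> m = 2 \<or> m = 3" using exhaust_3 by blast
  then show ?thesis
    by (elim disjE) (simp_all add: D4_def D3_def mentry_def monm_def algebra_simps power2_eq_square power3_eq_cube power4_eq_xxxx)
qed


typedef mon4 = D4 by (auto simp: D4_def)

instance mon4 :: finite
proof
  have "(UNIV :: mon4 set) = Abs_mon4 ` D4"
    using type_definition.univ[OF type_definition_mon4] .
  moreover have "finite D4" by (simp add: D4_def)
  ultimately show "finite (UNIV :: mon4 set)" by (metis finite_imageI)
qed

lemma sum_mon4: "(\<Sum>r\<in>UNIV. h (Rep_mon4 r)) = (\<Sum>t\<in>D4. h t)"
proof -
  have "inj Rep_mon4" by (meson Rep_mon4_inject injI)
  moreover have "Rep_mon4 ` UNIV = D4" using type_definition.Rep_range[OF type_definition_mon4] .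
  ultimately show ?thesis using sum.reindex[of Rep_mon4 UNIV h] by simp
qed

definition col :: "nat\<times>nat\<times>nat \<Rightarrow> 3 \<times> 4 \<times> 4" where
 "col t = (if t = (1,2,1) then (1,1,2)
   else if t = (0,3,1) then (2,1,2)
   else if t = (0,2,2) then (3,1,2)
   else if t = (0,0,4) then (3,1,3)
   else if t = (0,4,0) then (2,2,3)
   else if t = (0,1,3) then (2,1,3)
   else if t = (1,1,2) then (3,2,3)
   else if t = (2,2,0) then (2,1,4)
   else if t = (3,1,0) then (1,2,4)
   else if t = (2,0,2) then (1,1,4)
   else if t = (2,1,1) then (3,2,4)
   else if t = (1,0,3) then (3,1,4)
   else if t = (1,3,0) then (1,1,3)
   else if t = (4,0,0) then (1,3,4)
   else if t = (3,0,1) then (3,3,4)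
   else (1,1,2))"

lemma col_ne: "t \<in> D4 \<Longrightarrow> fst (snd (col t)) \<noteq> snd (snd (col t))"
  by (auto simp: D4_def col_def)

definition entry :: "tuple4 \<Rightarrow> nat\<times>nat\<times>nat \<Rightarrow> 3 \<times> 4 \<times> 4 \<Rightarrow> complex" where
  "entry S t c = mentry (S $ fst (snd c)) (S $ snd (snd c)) (fst c) t"

definition MT :: "tuple4 \<Rightarrow> complex^mon4^mon4" where
  "MT S = (\<chi> c r. entry S (Rep_mon4 r) (col (Rep_mon4 c)))"

definition Dp :: "tuple4 \<Rightarrow> 4 \<Rightarrow> 4 \<Rightarrow> complex^3 \<Rightarrow> complex" where
  "Dp S i j x = det3 x (S$i *v x) (S$j *v x)"

definition evec :: "complex^3 \<Rightarrow> complex^mon4" where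
  "evec v = (\<chi> r. monm (Rep_mon4 r) v)"

lemma MT_evec: "(MT S *v evec v) $ c =
   v $ fst (col (Rep_mon4 c)) * Dp S (fst (snd (col (Rep_mon4 c)))) (snd (snd (col (Rep_mon4 c)))) v"
proof -
  have "(MT S *v evec v) $ c = (\<Sum>r\<in>UNIV. entry S (Rep_mon4 r) (col (Rep_mon4 c)) * monm (Rep_mon4 r) v)"
    by (simp add: MT_def evec_def matrix_vector_mult_def)
  also have "\<dots> = (\<Sum>t\<in>D4. entry S t (col (Rep_mon4 c)) * monm t v)"
    by (rule sum_mon4)
  also have "\<dots> = v $ fst (col (Rep_mon4 c)) * Dp S (fst (snd (col (Rep_mon4 c)))) (snd (snd (col (Rep_mon4 c)))) v"
    unfolding entry_def Dp_def pexp by (rule mentry_sum)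
  finally show ?thesis .
qed

lemma evec_nz: "v \<noteq> 0 \<Longrightarrow> evec v \<noteq> 0"
proof
  assume v: "v \<noteq> 0" and e: "evec v = 0"
  have "(4::nat,0::nat,0::nat) \<in> D4" "(0::nat,4::nat,0::nat) \<in> D4" "(0::nat,0::nat,4::nat) \<in> D4" by (auto simp: D4_def)
  then have "evec v $ Abs_mon4 (4,0,0) = v$1^4" "evec v $ Abs_mon4 (0,4,0) = v$2^4" "evec v $ Abs_mon4 (0,0,4) = v$3^4"
    by (simp_all add: evec_def Abs_mon4_inverse monm_def)
  with e have "v$1 = 0" "v$2 = 0" "v$3 = 0" by auto
  then have "v = 0" by (simp add: vec_eq_iff forall_3)
  with v show False by simp
qed

lemma det_nz_ker:
  fixes A :: "'a::field^'n^'n"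
  shows "det A \<noteq> 0 \<longleftrightarrow> (\<forall>x. A *v x = 0 \<longrightarrow> x = 0)"
  by (simp add: invertible_det_nz[symmetric] invertible_left_inverse matrix_left_invertible_ker)

lemma some_Dp_nz:
  assumes "det (MT S) \<noteq> 0" "v \<noteq> 0"
  shows "\<exists>i j. i \<noteq> j \<and> Dp S i j v \<noteq> 0"
proof (rule ccontr)
  assume "\<not> ?thesis"
  then have z: "\<And>i j. i \<noteq> j \<Longrightarrow> Dp S i j v = 0" by blast
  have "MT S *v evec v = 0"
  proof (subst vec_eq_iff, rule allI)
    fix c
    have "Rep_mon4 c \<in> D4" using Rep_mon4 .
    then show "(MT S *v evec v) $ c = 0 $ c"
      using z[OF col_ne] by (simp add: MT_evec)
  qed
  with assms evec_nz show False using det_nz_ker by blast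
qed


lemma sum4_two:
  fixes f :: "4 \<Rightarrow> complex^3"
  assumes ne: "i \<noteq> j"
  shows "(\<Sum>k\<in>UNIV. (\<chi> k. if k = i then \<alpha> else if k = j then \<beta> else 0) $ k *s f k) = \<alpha> *s f i + \<beta> *s f j"
proof -
  have "\<And>k. (\<chi> k. if k = i then \<alpha> else if k = j then \<beta> else 0) $ k *s f k
          = (if k = i then \<alpha> *s f i else 0) + (if k = j then \<beta> *s f j else 0)"
    using ne by auto
  then show ?thesis by (simp add: sum.distrib)
qed

lemma generates_MT:
  assumes "det (MT S) \<noteq> 0"
  shows "generates S"
  unfolding generates_def
proof (intro allI impI)
  fix v w :: "complex^3"
  assume v: "v \<noteq> 0"
  obtain i j where ij: "i \<noteq> j" and D: "Dp S i j v \<noteq> 0" using some_Dp_nz[OF assms v] by blast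
  define wi where "wi = S$i *v v"
  define wj where "wj = S$j *v v"
  define d where "d = Dp S i j v"
  have d: "d = det3 v wi wj" by (simp add: d_def Dp_def wi_def wj_def)
  have dnz: "d \<noteq> 0" using D d_def by simp
  have idn: "det3 w wi wj *s v - det3 w v wj *s wi + det3 w v wi *s wj = d *s w"
    using det3_id[of w wi wj v] d by simp
  define a :: "complex^4" where "a = (\<chi> k. if k = i then - det3 w v wj / d else if k = j then det3 w v wi / d else 0)"
  have sa: "(\<Sum>k\<in>UNIV. a $ k *s (S $ k *v v)) = (- det3 w v wj / d) *s wi + (det3 w v wi / d) *s wj"
    unfolding a_def wi_def wj_def by (rule sum4_two[OF ij])
  have "w = (\<Sum>k\<in>UNIV. a $ k *s (S $ k *v v)) + (det3 w wi wj / d) *s v"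
  proof (subst vec_eq_iff, rule allI)
    fix l
    have "(det3 w wi wj *s v - det3 w v wj *s wi + det3 w v wi *s wj) $ l = (d *s w) $ l"
      using idn by simp
    then have e: "det3 w wi wj * v$l - det3 w v wj * wi$l + det3 w v wi * wj$l = d * w$l" by simp
    show "w $ l = ((\<Sum>k\<in>UNIV. a $ k *s (S $ k *v v)) + (det3 w wi wj / d) *s v) $ l"
      unfolding sa using e dnz by (simp add: field_simps)
  qed
  then show "\<exists>a t. w = (\<Sum>k\<in>UNIV. a $ k *s (S $ k *v v)) + t *s v" by blast
qed



definition r1 :: "tuple4 \<Rightarrow> complex^3 \<Rightarrow> complex^4" where
  "r1 S x = (\<chi> k. if k = 1 then Dp S 2 3 x else if k = 2 then - Dp S 1 3 x else if k = 3 then Dp S 1 2 x else 0)"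
definition r2 :: "tuple4 \<Rightarrow> complex^3 \<Rightarrow> complex^4" where
  "r2 S x = (\<chi> k. if k = 1 then Dp S 2 4 x else if k = 2 then - Dp S 1 4 x else if k = 3 then 0 else Dp S 1 2 x)"
definition Bm :: "tuple4 \<Rightarrow> complex^4 \<Rightarrow> complex^3^3" where
  "Bm S a = (\<chi> i j. \<Sum>k\<in>UNIV. a$k * S$k$i$j)"
definition Cm :: "tuple4 \<Rightarrow> complex^3 \<Rightarrow> complex^3^3" where
  "Cm S x = Bm S (r1 S x) ** Bm S (r2 S x) - Bm S (r2 S x) ** Bm S (r1 S x)"
definition gq :: "tuple4 \<Rightarrow> complex^3 \<Rightarrow> complex" where
  "gq S x = Cm S x $1$1 * Cm S x $3$2 - Cm S x $1$2 * Cm S x $3$1"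

lemma Bm_mv: "Bm S a *v y = (\<Sum>k\<in>UNIV. a$k *s (S$k *v y))"
  by (simp add: vec_eq_iff forall_3 matrix_vector_mult_def Bm_def sum_3 sum_4 algebra_simps)

lemma r1_phi: "r1 S x \<in> phi S x"
proof -
  have "(\<Sum>k\<in>UNIV. r1 S x $ k *s (S $ k *v x)) = det3 (S$1 *v x) (S$2 *v x) (S$3 *v x) *s x"
    using det3_id[of x "S$2 *v x" "S$3 *v x" "S$1 *v x"]
    by (simp add: sum_4 r1_def Dp_def)
  then show ?thesis unfolding phi_def by blast
qed

lemma r2_phi: "r2 S x \<in> phi S x"
proof -
  have "(\<Sum>k\<in>UNIV. r2 S x $ k *s (S $ k *v x)) = det3 (S$1 *v x) (S$2 *v x) (S$4 *v x) *s x"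
    using det3_id[of x "S$2 *v x" "S$4 *v x" "S$1 *v x"]
    by (simp add: sum_4 r2_def Dp_def)
  then show ?thesis unfolding phi_def by blast
qed

lemma phi_eig: "a \<in> phi S y \<Longrightarrow> \<exists>t. Bm S a *v y = t *s y"
  by (simp add: phi_def Bm_mv)

lemma Cm_ker:
  assumes "Bm S (r1 S x) *v z = t1 *s z" "Bm S (r2 S x) *v z = t2 *s z"
  shows "Cm S x *v z = 0"
proof -
  have "Cm S x *v z = Bm S (r1 S x) *v (Bm S (r2 S x) *v z) - Bm S (r2 S x) *v (Bm S (r1 S x) *v z)"
    by (simp add: Cm_def matrix_vector_mult_diff_rdistrib matrix_vector_mul_assoc)
  also have "\<dots> = 0" using assms by (simp add: vector_scalar_commute)
  finally show ?thesis .
qed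

lemma Cm_rows:
  assumes "Cm S x *v z = 0"
  shows "Cm S x $1$1 * z$1 + Cm S x $1$2 * z$2 + Cm S x $1$3 * z$3 = 0"
    and "Cm S x $3$1 * z$1 + Cm S x $3$2 * z$2 + Cm S x $3$3 * z$3 = 0"
proof -
  have "(Cm S x *v z)$1 = 0" "(Cm S x *v z)$3 = 0" using assms by simp_all
  then show "Cm S x $1$1 * z$1 + Cm S x $1$2 * z$2 + Cm S x $1$3 * z$3 = 0"
    and "Cm S x $3$1 * z$1 + Cm S x $3$2 * z$2 + Cm S x $3$3 * z$3 = 0"
    by (simp_all add: matrix_vector_mult_def sum_3)
qed

lemma lin2:
  fixes x y :: "complex^3"
  assumes x1: "a1 * x$1 + a2 * x$2 + a3 * x$3 = 0" and x2: "b1 * x$1 + b2 * x$2 + b3 * x$3 = 0"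
    and y1: "a1 * y$1 + a2 * y$2 + a3 * y$3 = 0" and y2: "b1 * y$1 + b2 * y$2 + b3 * y$3 = 0"
    and d: "a1 * b2 - a2 * b1 \<noteq> 0" and xnz: "x \<noteq> 0"
  shows "\<exists>c. y = c *s x"
proof -
  define \<Delta> where "\<Delta> = a1 * b2 - a2 * b1"
  have sol: "\<Delta> * z$1 = (a2 * b3 - a3 * b2) * z$3 \<and> \<Delta> * z$2 = (a3 * b1 - a1 * b3) * z$3"
    if "a1 * z$1 + a2 * z$2 + a3 * z$3 = 0" "b1 * z$1 + b2 * z$2 + b3 * z$3 = 0" for z :: "complex^3"
  proof -
    have A: "\<Delta> * z$1 - (a2 * b3 - a3 * b2) * z$3 = b2 * (a1 * z$1 + a2 * z$2 + a3 * z$3) - a2 * (b1 * z$1 + b2 * z$2 + b3 * z$3)"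
      by (simp add: \<Delta>_def algebra_simps)
    have B: "\<Delta> * z$2 - (a3 * b1 - a1 * b3) * z$3 = a1 * (b1 * z$1 + b2 * z$2 + b3 * z$3) - b1 * (a1 * z$1 + a2 * z$2 + a3 * z$3)"
      by (simp add: \<Delta>_def algebra_simps)
    show ?thesis using A B that by simp
  qed
  have dn: "\<Delta> \<noteq> 0" using d \<Delta>_def by simp
  have sx: "\<Delta> * x$1 = (a2 * b3 - a3 * b2) * x$3" "\<Delta> * x$2 = (a3 * b1 - a1 * b3) * x$3"
    using sol[OF x1 x2] by auto
  have sy: "\<Delta> * y$1 = (a2 * b3 - a3 * b2) * y$3" "\<Delta> * y$2 = (a3 * b1 - a1 * b3) * y$3"
    using sol[OF y1 y2] by auto
  have x3: "x$3 \<noteq> 0"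
  proof
    assume "x$3 = 0"
    then have "x$1 = 0" "x$2 = 0" using sx dn by auto
    then have "x = 0" using \<open>x$3 = 0\<close> by (simp add: vec_eq_iff forall_3)
    with xnz show False by simp
  qed
  define c where "c = y$3 / x$3"
  have "y = c *s x"
  proof (subst vec_eq_iff, simp add: forall_3, intro conjI)
    show "y$3 = c * x$3" using x3 by (simp add: c_def)
    have "\<Delta> * (c * x$1) = (\<Delta> * x$1) * y$3 / x$3" by (simp add: c_def)
    also have "\<dots> = ((a2 * b3 - a3 * b2) * x$3) * y$3 / x$3" using sx(1) by simp
    also have "\<dots> = (a2 * b3 - a3 * b2) * y$3" using x3 by simp
    also have "\<dots> = \<Delta> * y$1" using sy(1) by simp
    finally have "\<Delta> * y$1 = \<Delta> * (c * x$1)" by (rule sym)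
    then show "y$1 = c * x$1" using dn by simp
    have "\<Delta> * (c * x$2) = (\<Delta> * x$2) * y$3 / x$3" by (simp add: c_def)
    also have "\<dots> = ((a3 * b1 - a1 * b3) * x$3) * y$3 / x$3" using sx(2) by simp
    also have "\<dots> = (a3 * b1 - a1 * b3) * y$3" using x3 by simp
    also have "\<dots> = \<Delta> * y$2" using sy(2) by simp
    finally have "\<Delta> * y$2 = \<Delta> * (c * x$2)" by (rule sym)
    then show "y$2 = c * x$2" using dn by simp
  qed
  then show ?thesis by blast
qed

lemma inj_main:
  assumes g: "gq S x \<noteq> 0" and xnz: "x \<noteq> 0" and ph: "phi S y = phi S x"
  shows "proj_equiv x y"
proof -
  obtain s1 where s1: "Bm S (r1 S x) *v x = s1 *s x" using phi_eig[OF r1_phi] by blast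
  obtain s2 where s2: "Bm S (r2 S x) *v x = s2 *s x" using phi_eig[OF r2_phi] by blast
  obtain t1 where t1: "Bm S (r1 S x) *v y = t1 *s y" using phi_eig r1_phi ph by metis
  obtain t2 where t2: "Bm S (r2 S x) *v y = t2 *s y" using phi_eig r2_phi ph by metis
  have kx: "Cm S x *v x = 0" by (rule Cm_ker[OF s1 s2])
  have ky: "Cm S x *v y = 0" by (rule Cm_ker[OF t1 t2])
  show ?thesis unfolding proj_equiv_def
    by (rule lin2[OF Cm_rows[OF kx] Cm_rows[OF ky]]) (use g xnz in \<open>simp_all add: gq_def\<close>)
qed



lemmas pf_intros = pf_const pf_add pf_mult pf_diff pf_uminus pf_sum pf_prod pf_if pf_coordV pf_coord3
lemma Dp_pf_x: "(\<lambda>x. Dp S i j x) \<in> polyfun coords3"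
  unfolding Dp_def det3_def matrix_vector_mult_def
  by (simp only: vec_lambda_beta) (intro pf_intros)
lemma r1_pf_x: "(\<lambda>x. r1 S x $ k) \<in> polyfun coords3"
  unfolding r1_def vec_lambda_beta by (intro pf_if pf_uminus Dp_pf_x pf_const)
lemma r2_pf_x: "(\<lambda>x. r2 S x $ k) \<in> polyfun coords3"
  unfolding r2_def vec_lambda_beta by (intro pf_if pf_uminus Dp_pf_x pf_const)
lemma B1_pf_x: "(\<lambda>x. Bm S (r1 S x) $ i $ j) \<in> polyfun coords3"
  unfolding Bm_def vec_lambda_beta by (intro pf_sum pf_mult r1_pf_x pf_const)

lemma B2_pf_x: "(\<lambda>x. Bm S (r2 S x) $ i $ j) \<in> polyfun coords3"
  unfolding Bm_def vec_lambda_beta by (intro pf_sum pf_mult r2_pf_x pf_const)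
lemma Cm_pf_x: "(\<lambda>x. Cm S x $ i $ j) \<in> polyfun coords3"
  unfolding Cm_def matrix_matrix_mult_def vector_minus_component vec_lambda_beta
  by (intro pf_diff pf_sum pf_mult B1_pf_x B2_pf_x)

lemma gq_pf_x: "gq S \<in> polyfun coords3"
proof -
  have "(\<lambda>x. gq S x) \<in> polyfun coords3"
    unfolding gq_def by (intro pf_diff pf_mult Cm_pf_x)
  then show ?thesis by simp
qed

lemma det3_scale: "det3 (c *s a) (c *s b) (c *s d) = c^3 * det3 a b d"
  by (simp add: det3_def algebra_simps power3_eq_cube)

lemma Dp_scale: "Dp S i j (c *s x) = c^3 * Dp S i j x"
  by (simp add: Dp_def vector_scalar_commute det3_scale)

lemma r1_scale: "r1 S (c *s x) = c^3 *s r1 S x"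
  by (simp add: vec_eq_iff r1_def Dp_scale)
lemma r2_scale: "r2 S (c *s x) = c^3 *s r2 S x"
  by (simp add: vec_eq_iff r2_def Dp_scale)

lemma Bm_scale: "Bm S (d *s a) $ i $ j = d * Bm S a $ i $ j"
  by (simp add: Bm_def sum_distrib_left mult.assoc)

lemma mm_scale:
  fixes A B A' B' :: "complex^3^3"
  assumes "\<And>i j. A' $ i $ j = d * A $ i $ j" "\<And>i j. B' $ i $ j = e * B $ i $ j"
  shows "(A' ** B') $ i $ j = (d * e) * (A ** B) $ i $ j"
  by (simp add: matrix_matrix_mult_def assms sum_distrib_left mult_ac)

lemma Cm_scale: "Cm S (c *s x) $ i $ j = c^6 * Cm S x $ i $ j"
proof -
  have p: "c^6 = c^3 * c^3" by (simp add: power_add[symmetric])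
  have a: "(Bm S (r1 S (c *s x)) ** Bm S (r2 S (c *s x))) $ i $ j = (c^3 * c^3) * (Bm S (r1 S x) ** Bm S (r2 S x)) $ i $ j"
    by (rule mm_scale) (simp_all add: r1_scale r2_scale Bm_scale)
  have b: "(Bm S (r2 S (c *s x)) ** Bm S (r1 S (c *s x))) $ i $ j = (c^3 * c^3) * (Bm S (r2 S x) ** Bm S (r1 S x)) $ i $ j"
    by (rule mm_scale) (simp_all add: r1_scale r2_scale Bm_scale)
  show ?thesis unfolding Cm_def vector_minus_component a b p by (simp add: right_diff_distrib)
qed

lemma gq_hom: "gq S (c *s x) = c^12 * gq S x"
proof -
  have p: "c^12 = c^6 * c^6" by (simp add: power_add[symmetric])
  show ?thesis unfolding gq_def Cm_scale p by (simp add: algebra_simps)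
qed

lemma Dp_pf_S: "(\<lambda>S. Dp S i j x) \<in> polyfun coords_V4"
  unfolding Dp_def det3_def matrix_vector_mult_def
  by (simp only: vec_lambda_beta) (intro pf_intros)
lemma r1_pf_S: "(\<lambda>S. r1 S x $ k) \<in> polyfun coords_V4"
  unfolding r1_def vec_lambda_beta by (intro pf_if pf_uminus Dp_pf_S pf_const)
lemma r2_pf_S: "(\<lambda>S. r2 S x $ k) \<in> polyfun coords_V4"
  unfolding r2_def vec_lambda_beta by (intro pf_if pf_uminus Dp_pf_S pf_const)
lemma B1_pf_S: "(\<lambda>S. Bm S (r1 S x) $ i $ j) \<in> polyfun coords_V4"
  unfolding Bm_def vec_lambda_beta by (intro pf_sum pf_mult r1_pf_S pf_coordV)
lemma B2_pf_S: "(\<lambda>S. Bm S (r2 S x) $ i $ j) \<in> polyfun coords_V4"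
  unfolding Bm_def vec_lambda_beta by (intro pf_sum pf_mult r2_pf_S pf_coordV)
lemma Cm_pf_S: "(\<lambda>S. Cm S x $ i $ j) \<in> polyfun coords_V4"
  unfolding Cm_def matrix_matrix_mult_def vector_minus_component vec_lambda_beta
  by (intro pf_diff pf_sum pf_mult B1_pf_S B2_pf_S)
lemma gq_pf_S: "(\<lambda>S. gq S x) \<in> polyfun coords_V4"
  unfolding gq_def by (intro pf_diff pf_mult Cm_pf_S)

lemma cf_pf: "(\<lambda>S. cf (S$i) (S$j) t) \<in> polyfun coords_V4"
  unfolding cf_def by (intro pf_intros)

lemma mentry_pf: "(\<lambda>S. mentry (S$i) (S$j) m t) \<in> polyfun coords_V4"
proof (cases t)
  case (fields a b c)
  show ?thesis unfolding mentry_def fields prod.case by (intro pf_if cf_pf pf_const)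
qed

lemma MT_pf: "(\<lambda>S. det (MT S)) \<in> polyfun coords_V4"
proof (rule pf_det)
  fix i j
  show "(\<lambda>S. MT S $ i $ j) \<in> polyfun coords_V4"
    unfolding MT_def entry_def vec_lambda_beta by (rule mentry_pf)
qed

lemma gq_homogeneous: "homogeneous (gq S)"
  unfolding homogeneous_def using gq_hom by blast


definition s0 :: "4 \<Rightarrow> 3 \<Rightarrow> 3 \<Rightarrow> complex" where
 "s0 k i j = (if k = 1 then (if (i = 1 \<and> j = 3) \<or> (i = 3 \<and> j = 2) then 1 else 0)
   else if k = 2 then (if i = 3 \<and> j = 2 then 1 else 0)
   else if k = 3 then (if (i = 1 \<and> j = 2) \<or> (i = 2 \<and> j = 3) then 1 else if i = 3 \<and> j = 1 then -1 else 0)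
   else (if i = 2 \<and> j = 1 then -1 else 0))"

definition S0 :: tuple4 where "S0 = (\<chi> k i j. s0 k i j)"
definition x0 :: "complex^3" where "x0 = (\<chi> i. 1)"

lemma S0_V4: "S0 \<in> V4"
  by (simp add: V4_def S0_def s0_def trace_def sum_3 forall_4)

lemma S0_ent: "S0 $ k $ i $ j = s0 k i j" by (simp add: S0_def)

lemma Dp_S0:
  "Dp S0 2 3 x0 = 0" "Dp S0 1 3 x0 = 2" "Dp S0 1 2 x0 = -1" "Dp S0 2 4 x0 = 1" "Dp S0 1 4 x0 = 0"
  by (simp_all add: Dp_def det3_def matrix_vector_mult_def sum_3 S0_ent s0_def x0_def)

lemma gq_S0: "gq S0 x0 = 4"
proof -
  have r1: "r1 S0 x0 = (\<chi> k. if k = 1 then 0 else if k = 2 then -2 else if k = 3 then -1 else 0)"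
    by (simp add: vec_eq_iff forall_4 r1_def Dp_S0)
  have r2: "r2 S0 x0 = (\<chi> k. if k = 1 then 1 else if k = 2 then 0 else if k = 3 then 0 else -1)"
    by (simp add: vec_eq_iff forall_4 r2_def Dp_S0)
  have B1: "Bm S0 (r1 S0 x0) $ i $ j = -2 * s0 2 i j - s0 3 i j" for i j
    by (simp add: Bm_def r1 sum_4 S0_ent)
  have B2: "Bm S0 (r2 S0 x0) $ i $ j = s0 1 i j - s0 4 i j" for i j
    by (simp add: Bm_def r2 sum_4 S0_ent)
  show ?thesis
    by (simp add: gq_def Cm_def matrix_matrix_mult_def sum_3 B1 B2 s0_def)
qed

definition pos :: "4 \<Rightarrow> 3 \<times> 3" where
  "pos l = (if l = 1 then (1,3) else if l = 2 then (3,2) else if l = 3 then (1,2) else (2,1))"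

definition Nm :: "tuple4 \<Rightarrow> complex^4^4" where
  "Nm S = (\<chi> k l. S $ k $ fst (pos l) $ snd (pos l))"

lemma Nm_pf: "(\<lambda>S. det (Nm S)) \<in> polyfun coords_V4"
  by (rule pf_det) (simp add: Nm_def pf_coordV)

lemma Nm_lin: assumes "det (Nm S) \<noteq> 0" shows "lin_indep4 S"
  unfolding lin_indep4_def
proof (intro allI impI)
  fix a :: "complex^4"
  assume h: "\<forall>i j. (\<Sum>k\<in>UNIV. a $ k * S $ k $ i $ j) = 0"
  have "transpose (Nm S) *v a = 0"
    using h by (simp add: vec_eq_iff matrix_vector_mult_def transpose_def Nm_def mult.commute)
  moreover have "det (transpose (Nm S)) \<noteq> 0" using assms by simp
  ultimately show "a = 0" using det_nz_ker by blast
qed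

lemma Nm_S0: "det (Nm S0) \<noteq> 0"
  unfolding det_nz_ker
proof (intro allI impI)
  fix z :: "complex^4"
  assume "Nm S0 *v z = 0"
  then have "\<forall>k. (Nm S0 *v z) $ k = 0" by simp
  then show "z = 0"
    by (auto simp add: forall_4 vec_eq_iff matrix_vector_mult_def sum_4 Nm_def pos_def S0_ent s0_def)
qed



lemma MT_S0: "det (MT S0) \<noteq> 0"
  unfolding det_nz_ker
proof (intro allI impI)
  fix z :: "complex^mon4"
  assume h: "MT S0 *v z = 0"
  define zz where "zz t = z $ Abs_mon4 t" for t
  have eq: "(\<Sum>t\<in>D4. entry S0 t (col t') * zz t) = 0" if t': "t' \<in> D4" for t'
  proof -
    have "(MT S0 *v z) $ Abs_mon4 t' = 0" using h by simp
    moreover have "(MT S0 *v z) $ Abs_mon4 t' = (\<Sum>r\<in>UNIV. entry S0 (Rep_mon4 r) (col t') * zz (Rep_mon4 r))"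
      by (simp add: MT_def matrix_vector_mult_def zz_def Rep_mon4_inverse Abs_mon4_inverse[OF t'])
    ultimately show ?thesis using sum_mon4[of "\<lambda>t. entry S0 t (col t') * zz t"] by simp
  qed
  have all: "zz (1,2,1) = 0 \<and> zz (0,3,1) = 0 \<and> zz (0,2,2) = 0 \<and> zz (0,0,4) = 0 \<and> zz (0,4,0) = 0 \<and>
     zz (0,1,3) = 0 \<and> zz (1,1,2) = 0 \<and> zz (2,2,0) = 0 \<and> zz (3,1,0) = 0 \<and> zz (2,0,2) = 0 \<and>
     zz (2,1,1) = 0 \<and> zz (1,0,3) = 0 \<and> zz (1,3,0) = 0 \<and> zz (4,0,0) = 0 \<and> zz (3,0,1) = 0"
    using eq[of "(1,2,1)"] eq[of "(0,3,1)"] eq[of "(0,2,2)"] eq[of "(0,0,4)"] eq[of "(0,4,0)"]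
      eq[of "(0,1,3)"] eq[of "(1,1,2)"] eq[of "(2,2,0)"] eq[of "(3,1,0)"] eq[of "(2,0,2)"]
      eq[of "(2,1,1)"] eq[of "(1,0,3)"] eq[of "(1,3,0)"] eq[of "(4,0,0)"] eq[of "(3,0,1)"]
    by (simp add: D4_def entry_def col_def mentry_def cf_def S0_ent s0_def)
  show "z = 0"
  proof (subst vec_eq_iff, rule allI)
    fix r
    have "Rep_mon4 r \<in> D4" by (rule Rep_mon4)
    then have "zz (Rep_mon4 r) = 0" using all by (auto simp: D4_def)
    then show "z $ r = 0 $ r" by (simp add: zz_def Rep_mon4_inverse)
  qed
qed



theorem theorem1:
  shows "\<exists>U. zariski_open coords_V4 V4 U \<and> U \<noteq> {} \<and> U \<subseteq> Sset \<and>
           (\<forall>S \<in> U. generically_injective S)"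
proof -
  define Pz where "Pz S = det (Nm S) * det (MT S) * gq S x0" for S
  define U where "U = {S \<in> V4. Pz S \<noteq> 0}"
  have "(\<lambda>S. det (Nm S) * det (MT S) * gq S x0) \<in> polyfun coords_V4"
    by (intro pf_mult Nm_pf MT_pf gq_pf_S)
  then have pf: "Pz \<in> polyfun coords_V4" by (simp add: Pz_def[abs_def])
  have zo: "zariski_open coords_V4 V4 U"
    unfolding zariski_open_def zariski_closed_def
  proof (intro conjI exI[of _ "{Pz}"])
    show "U \<subseteq> V4" by (auto simp: U_def)
    show "{Pz} \<subseteq> polyfun coords_V4" using pf by simp
    show "V4 - U = {x \<in> V4. \<forall>f\<in>{Pz}. f x = 0}" by (auto simp: U_def)
  qed
  have x0nz: "x0 \<noteq> 0"
  proof
    assume "x0 = 0"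
    then have "x0 $ 1 = 0" by simp
    then show False by (simp add: x0_def)
  qed
  have "S0 \<in> U"
    using S0_V4 Nm_S0 MT_S0 gq_S0 by (simp add: U_def Pz_def)
  then have ne: "U \<noteq> {}" by blast
  have sub: "U \<subseteq> Sset"
  proof
    fix S assume "S \<in> U"
    then have "S \<in> V4" "det (Nm S) \<noteq> 0" "det (MT S) \<noteq> 0" by (auto simp: U_def Pz_def)
    then show "S \<in> Sset" using Nm_lin generates_MT by (simp add: Sset_def)
  qed
  have gi: "generically_injective S" if "S \<in> U" for S
  proof -
    have g0: "gq S x0 \<noteq> 0" using that by (auto simp: U_def Pz_def)
    define W where "W = {x. x \<noteq> 0 \<and> gq S x \<noteq> 0}"
    have "P2_zariski_open W"
      unfolding P2_zariski_open_def
    proof (intro conjI exI[of _ "{gq S}"])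
      show "W \<subseteq> {x. x \<noteq> 0}" by (auto simp: W_def)
      show "{gq S} \<subseteq> polyfun coords3" using gq_pf_x by simp
      show "\<forall>f\<in>{gq S}. homogeneous f" using gq_homogeneous by simp
      show "{x. x \<noteq> 0} - W = {x. x \<noteq> 0 \<and> (\<forall>f\<in>{gq S}. f x = 0)}" by (auto simp: W_def)
    qed
    moreover have "W \<noteq> {}" using x0nz g0 by (auto simp: W_def)
    moreover have "\<forall>x\<in>W. \<forall>y. y \<noteq> 0 \<and> phi S y = phi S x \<longrightarrow> proj_equiv x y"
      using inj_main by (auto simp: W_def)
    ultimately show ?thesis unfolding generically_injective_def by blast
  qed
  show ?thesis using zo ne sub gi by blast
qed


end
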